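(* Let $n\geq 3$ be an integer and let $\mathcal{E}_n$ be the Fomin–Kirillov algebra over an algebraically closed field $k$. Then $\mathcal{E}_n$ admits no truncated point modules of degree greater than $1$; that is, $\mathcal{P}_d(\mathcal{E}_n)=\emptyset$ for every $d\geq 2$.
   Context: The Fomin–Kirillov algebra $\mathcal{E}_n$ is the graded $k$-algebra generated by elements $x_{ij}$, $1\leq i<j\leq n$, all of degree $1$, subject to the relations: $x_{ij}^2=0$ for all $i<j$; $x_{ij}x_{kl}-x_{kl}x_{ij}=0$ for all $i<j$, $k<l$ with $\{i,j\}\cap\{k,l\}=\emptyset$; $x_{ij}x_{jk}-x_{jk}x_{ik}-x_{ik}x_{ij}=0$ and $x_{jk}x_{ij}-x_{ik}x_{jk}-x_{ij}x_{ik}=0$ for all $i<j<k$. For a connected graded $k$-algebra $A=k\oplus A_1\oplus A_2\oplus\cdots$ generated in degree $1$, a degree-$d$ (or $d$-truncated) point module is a graded cyclic left $A$-module $M=M_0\oplus\cdots\oplus M_d$ generated in degree $0$ with Hilbert series $1+t+\cdots+t^d$ (each $M_i$ one-dimensional). $\mathcal{P}_d(A)$ denotes the space of $d$-truncated point modules of $A$. *)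

theory Defs
  imports "HOL-Computational_Algebra.Polynomial"
begin

definition alg_closed :: "'k::field itself \<Rightarrow> bool" where
  "alg_closed _ \<longleftrightarrow> (\<forall>p :: 'k poly. 0 < degree p \<longrightarrow> (\<exists>x. poly p x = 0))"

definition FK_gen :: "nat \<Rightarrow> nat \<times> nat \<Rightarrow> bool" where
  "FK_gen n g \<longleftrightarrow> 1 \<le> fst g \<and> fst g < snd g \<and> snd g \<le> n"

(* A graded vector space M = M_0 + ... + M_d with each M_m one-dimensional is,
   after choosing basis vectors e_m of M_m, the space of coefficient functions
   v :: nat => 'k supported in {0..d}.  A graded (degree-preserving) left action
   of a degree-1 generator g sends M_m to M_(m+1) (and M_d to 0); a linear map between
   one-dimensional spaces is a scalar, so the action of g is  e_m |-> a g m * e_(m+1). *)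
definition supp_le :: "nat \<Rightarrow> (nat \<Rightarrow> 'k::zero) \<Rightarrow> bool" where
  "supp_le d v \<longleftrightarrow> (\<forall>m>d. v m = 0)"

definition act :: "(nat \<times> nat \<Rightarrow> nat \<Rightarrow> 'k::field) \<Rightarrow> nat \<Rightarrow> nat \<times> nat
                    \<Rightarrow> (nat \<Rightarrow> 'k) \<Rightarrow> (nat \<Rightarrow> 'k)" where
  "act a d g v = (\<lambda>m. if 1 \<le> m \<and> m \<le> d then a g (m - 1) * v (m - 1) else 0)"

definition FK_relations :: "nat \<Rightarrow> nat \<Rightarrow> (nat \<times> nat \<Rightarrow> nat \<Rightarrow> 'k::field) \<Rightarrow> bool" where
  "FK_relations n d a \<longleftrightarrow>
     (\<forall>v. supp_le d v \<longrightarrow>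
       (\<forall>i j. 1 \<le> i \<and> i < j \<and> j \<le> n \<longrightarrow>
           (\<forall>m. act a d (i,j) (act a d (i,j) v) m = 0)) \<and>
       (\<forall>i j k l. 1 \<le> i \<and> i < j \<and> j \<le> n \<and> 1 \<le> k \<and> k < l \<and> l \<le> n
           \<and> {i,j} \<inter> {k,l} = {} \<longrightarrow>
           (\<forall>m. act a d (i,j) (act a d (k,l) v) m - act a d (k,l) (act a d (i,j) v) m = 0)) \<and>
       (\<forall>i j k. 1 \<le> i \<and> i < j \<and> j < k \<and> k \<le> n \<longrightarrow>
           (\<forall>m. act a d (i,j) (act a d (j,k) v) m - act a d (j,k) (act a d (i,k) v) m
             - act a d (i,k) (act a d (i,j) v) m = 0) \<and>
           (\<forall>m. act a d (j,k) (act a d (i,j) v) m - act a d (i,k) (act a d (j,k) v) m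
             - act a d (i,j) (act a d (i,k) v) m = 0)))"

inductive_set gen_by_deg0 :: "nat \<Rightarrow> nat \<Rightarrow> (nat \<times> nat \<Rightarrow> nat \<Rightarrow> 'k::field) \<Rightarrow> (nat \<Rightarrow> 'k) set"
  for n d a where
  base: "(\<lambda>m. if m = 0 then c else 0) \<in> gen_by_deg0 n d a"
| add: "v \<in> gen_by_deg0 n d a \<Longrightarrow> w \<in> gen_by_deg0 n d a \<Longrightarrow> (\<lambda>m. v m + w m) \<in> gen_by_deg0 n d a"
| step: "FK_gen n g \<Longrightarrow> v \<in> gen_by_deg0 n d a \<Longrightarrow> act a d g v \<in> gen_by_deg0 n d a"

(* d-truncated point module of E_n (with the chosen bases):
   a graded left E_n-module with Hilbert series 1 + t + ... + t^d, generated in degree 0. *)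
definition FK_point_module :: "nat \<Rightarrow> nat \<Rightarrow> (nat \<times> nat \<Rightarrow> nat \<Rightarrow> 'k::field) \<Rightarrow> bool" where
  "FK_point_module n d a \<longleftrightarrow> FK_relations n d a \<and>
     (\<forall>v. supp_le d v \<longrightarrow> v \<in> gen_by_deg0 n d a)"

definition point_modules :: "'k::field itself \<Rightarrow> nat \<Rightarrow> nat \<Rightarrow> (nat \<times> nat \<Rightarrow> nat \<Rightarrow> 'k) set" where
  "point_modules _ n d = {a. FK_point_module n d a}"

end

theory Submission
  imports Defs
begin

lemma tri:
  fixes pij pik pjk qij qik qjk :: "'k::field"
  assumes "qij*pij=0" "qik*pik=0" "qjk*pjk=0"
    "qij*pjk - qjk*pik - qik*pij = 0" "qjk*pij - qik*pjk - qij*pik = 0"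
    "pij\<noteq>0 \<or> pik\<noteq>0 \<or> pjk\<noteq>0"
  shows "qij=0 \<and> qik=0 \<and> qjk=0"
proof -
  have e1: "qij*pjk = qjk*pik + qik*pij" using assms(4) by (simp add: algebra_simps)
  have e2: "qjk*pij = qik*pjk + qij*pik" using assms(5) by (simp add: algebra_simps)
  consider "pij \<noteq> 0" | "pik \<noteq> 0" | "pjk \<noteq> 0" using assms(6) by blast
  then show ?thesis
  proof cases
    case 1
    hence q1: "qij = 0" using assms(1) by simp
    have u: "qjk = qik*pjk/pij" using e2 1 q1 by (simp add: field_simps)
    have "qik * (pij*pij + pik*pjk) = 0"
      using e1 u q1 1 by (simp add: field_simps)
    moreover have "qik = 0"
    proof (rule ccontr)
      assume h: "qik \<noteq> 0"
      hence "pik = 0" using assms(2) by simp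
      with calculation h 1 show False by simp
    qed
    ultimately show ?thesis using u q1 by simp
  next
    case 2
    hence q2: "qik = 0" using assms(2) by simp
    have "qij = 0"
    proof (rule ccontr)
      assume h: "qij \<noteq> 0"
      hence "pij = 0" using assms(1) by simp
      hence "qij*pik = 0" using e2 q2 by simp
      with h 2 show False by simp
    qed
    moreover have "qjk = 0" using e1 q2 calculation 2 by simp
    ultimately show ?thesis using q2 by simp
  next
    case 3
    hence q3: "qjk = 0" using assms(3) by simp
    have "qij = 0"
    proof (rule ccontr)
      assume h: "qij \<noteq> 0"
      hence "pij = 0" using assms(1) by simp
      hence "qij*pjk = 0" using e1 q3 by simp
      with h 3 show False by simp
    qed
    moreover have "qik = 0" using e2 q3 calculation 3 by simp
    ultimately show ?thesis using q3 by simp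
  qed
qed

lemma gen_zero:
  assumes "\<forall>g. FK_gen n g \<longrightarrow> a g m = 0"
  shows "v \<in> gen_by_deg0 n d a \<Longrightarrow> v (Suc m) = 0"
proof (induction v rule: gen_by_deg0.induct)
  case (base c) then show ?case by simp
next
  case (add v w) then show ?case by simp
next
  case (step g v)
  have "a g m = 0" using assms step(1) by blast
  then show ?case by (simp add: act_def)
qed

lemma gen_nonzero:
  assumes "FK_point_module n d a" "m < d"
  shows "\<exists>g. FK_gen n g \<and> a g m \<noteq> 0"
proof (rule ccontr)
  assume "\<not> ?thesis"
  hence h: "\<forall>g. FK_gen n g \<longrightarrow> a g m = 0" by blast
  let ?v = "(\<lambda>k. if k = Suc m then (1::'a) else 0)"
  have "supp_le d ?v" using assms(2) by (simp add: supp_le_def)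
  hence "?v \<in> gen_by_deg0 n d a" using assms(1) by (simp add: FK_point_module_def)
  from gen_zero[OF h this] show False by simp
qed

lemma act2:
  assumes "d \<ge> 2"
  shows "act a d g (act a d h (\<lambda>m. if m=0 then 1 else 0)) 2 = a g 1 * a h 0"
  using assms by (simp add: act_def)

theorem theorem1p1:
  fixes n d :: nat
  assumes "alg_closed TYPE('k::field)"
    and "n \<ge> 3"
    and "d \<ge> 2"
  shows "point_modules TYPE('k) n d = {}"
proof (rule ccontr)
  assume "point_modules TYPE('k) n d \<noteq> {}"
  then obtain a :: "nat \<times> nat \<Rightarrow> nat \<Rightarrow> 'k" where pm: "FK_point_module n d a"
    by (auto simp: point_modules_def)
  obtain g where g: "FK_gen n g" "a g 0 \<noteq> 0" using gen_nonzero[OF pm, of 0] assms(3) by auto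
  obtain h where h: "FK_gen n h" "a h 1 \<noteq> 0" using gen_nonzero[OF pm, of 1] assms(3) by auto
  let ?v = "(\<lambda>m. if m=0 then (1::'k) else 0)"
  have "supp_le d ?v" by (simp add: supp_le_def)
  have rel: "FK_relations n d a" using pm by (simp add: FK_point_module_def)
  note RR = mp[OF spec[OF rel[unfolded FK_relations_def], of ?v] \<open>supp_le d ?v\<close>]
  note R1 = conjunct1[OF RR, rule_format]
  note R2 = conjunct1[OF conjunct2[OF RR], rule_format]
  note R3 = conjunct2[OF conjunct2[OF RR], rule_format]
  define P where "P x = a x 0" for x
  define Q where "Q x = a x 1" for x
  have C: "\<And>i j. 1 \<le> i \<Longrightarrow> i < j \<Longrightarrow> j \<le> n \<Longrightarrow> Q (i,j) * P (i,j) = 0"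
  proof -
    fix i j assume "1 \<le> i" "i < j" "j \<le> n"
    hence "act a d (i,j) (act a d (i,j) ?v) 2 = 0" by (intro R1) auto
    thus "Q (i,j) * P (i,j) = 0" by (simp add: act2[OF assms(3)] P_def Q_def)
  qed
  have D: "\<And>i j k l. 1 \<le> i \<Longrightarrow> i < j \<Longrightarrow> j \<le> n \<Longrightarrow> 1 \<le> k \<Longrightarrow> k < l \<Longrightarrow> l \<le> n
      \<Longrightarrow> {i,j} \<inter> {k,l} = {} \<Longrightarrow> Q (i,j) * P (k,l) - Q (k,l) * P (i,j) = 0"
  proof -
    fix i j k l assume "1 \<le> i" "i < j" "j \<le> n" "1 \<le> k" "k < l" "l \<le> n" "{i,j} \<inter> {k,l} = {}"
    hence
      "act a d (i,j) (act a d (k,l) ?v) 2 - act a d (k,l) (act a d (i,j) ?v) 2 = 0"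
      by (intro R2) auto
    thus "Q (i,j) * P (k,l) - Q (k,l) * P (i,j) = 0" by (simp add: act2[OF assms(3)] P_def Q_def)
  qed
  have T: "\<And>i j k. 1 \<le> i \<Longrightarrow> i < j \<Longrightarrow> j < k \<Longrightarrow> k \<le> n \<Longrightarrow>
      Q (i,j) * P (j,k) - Q (j,k) * P (i,k) - Q (i,k) * P (i,j) = 0 \<and>
      Q (j,k) * P (i,j) - Q (i,k) * P (j,k) - Q (i,j) * P (i,k) = 0"
  proof -
    fix i j k assume "1 \<le> i" "i < j" "j < k" "k \<le> n"
    hence
      "act a d (i,j) (act a d (j,k) ?v) 2 - act a d (j,k) (act a d (i,k) ?v) 2
             - act a d (i,k) (act a d (i,j) ?v) 2 = 0 \<and>
       act a d (j,k) (act a d (i,j) ?v) 2 - act a d (i,k) (act a d (j,k) ?v) 2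
             - act a d (i,j) (act a d (i,k) ?v) 2 = 0"
      using R3[of i j k] by auto
    thus "Q (i,j) * P (j,k) - Q (j,k) * P (i,k) - Q (i,k) * P (i,j) = 0 \<and>
      Q (j,k) * P (i,j) - Q (i,k) * P (j,k) - Q (i,j) * P (i,k) = 0"
      by (simp add: act2[OF assms(3)] P_def Q_def)
  qed
  have TR: "\<And>i j k. 1 \<le> i \<Longrightarrow> i < j \<Longrightarrow> j < k \<Longrightarrow> k \<le> n \<Longrightarrow>
      P (i,j) \<noteq> 0 \<or> P (i,k) \<noteq> 0 \<or> P (j,k) \<noteq> 0 \<Longrightarrow> Q (i,j) = 0 \<and> Q (i,k) = 0 \<and> Q (j,k) = 0"
  proof -
    fix i j k assume a1: "1 \<le> i" "i < j" "j < k" "k \<le> n"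
      and a2: "P (i,j) \<noteq> 0 \<or> P (i,k) \<noteq> 0 \<or> P (j,k) \<noteq> 0"
    show "Q (i,j) = 0 \<and> Q (i,k) = 0 \<and> Q (j,k) = 0"
      by (rule tri[OF C C C conjunct1[OF T] conjunct2[OF T] a2]) (use a1 in auto)
  qed
  obtain i j where gij: "g = (i,j)" by (cases g)
  obtain k l where hkl: "h = (k,l)" by (cases h)
  have gi: "1 \<le> i" "i < j" "j \<le> n" using g(1) gij by (auto simp: FK_gen_def)
  have hk: "1 \<le> k" "k < l" "l \<le> n" using h(1) hkl by (auto simp: FK_gen_def)
  have Pg: "P (i,j) \<noteq> 0" using g(2) gij P_def by simp
  have Qh: "Q (k,l) \<noteq> 0" using h(2) hkl Q_def by simp
  have "Q (k,l) = 0"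
  proof -
    consider "i = k \<and> j = l" | "{i,j} \<inter> {k,l} = {}"
      | "i = k \<and> j < l" | "i = k \<and> l < j" | "j = l \<and> i < k" | "j = l \<and> k < i"
      | "i = l" | "j = k"
      using gi(2) hk(2) by (cases "i = k"; cases "j = l"; cases "i = l"; cases "j = k") (auto simp: linorder_neq_iff)
    then show ?thesis
    proof cases
      case 1 then show ?thesis using C[OF gi] Pg by simp
    next
      case 2 then show ?thesis using D[OF gi hk 2] C[OF gi] Pg
        by (metis mult_eq_0_iff right_minus_eq)
    next
      case 3 then show ?thesis using TR[of i j l] gi hk Pg by auto
    next
      case 4 then show ?thesis using TR[of i l j] gi hk Pg by auto
    next
      case 5 then show ?thesis using TR[of i k j] gi hk Pg by auto
    next
      case 6 then show ?thesis using TR[of k i j] gi hk Pg by auto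
    next
      case 7 then show ?thesis using TR[of k i j] gi hk Pg by auto
    next
      case 8 then show ?thesis using TR[of i j l] gi hk Pg by auto
    qed
  qed
  with Qh show False by simp
qed

end
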